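(* The map $c\mapsto G(c)$ from $\mathbb{R}^m$ to the space of convex bodies of $\mathbb{R}^m$ (with the Hausdorff distance) is continuous. Moreover, for every $c\in\mathbb{R}^m\setminus\{0\}$, the map $t\mapsto G(tc)$ is strictly increasing with respect to inclusion on $t>0$.
   Context: For a convex body $K\subset\mathbb{R}^m$ its support function is $h_K(u)=\sup\{\langle u,x\rangle: x\in K\}$, and the Hausdorff distance between convex bodies is $d(K,L)=\sup_{\|u\|=1}|h_K(u)-h_L(u)|$. For an integrable random vector $X\in\mathbb{R}^m$, the Vitale zonoid $\mathbb{E}\underline{X}$ is the convex body with support function $h_{\mathbb{E}\underline{X}}(u)=\frac12\mathbb{E}|\langle u,X\rangle|$. For $c\in\mathbb{R}^m$, $G(c):=\mathbb{E}\underline{c+\xi}$ where $\xi\in\mathbb{R}^m$ is a standard Gaussian vector. *)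

theory Defs
  imports "HOL-Probability.Probability"
begin

definition support_fun :: "'a::euclidean_space set \<Rightarrow> 'a \<Rightarrow> real" where
  "support_fun K u = (SUP x\<in>K. inner u x)"

definition hausdorff_cb :: "'a::euclidean_space set \<Rightarrow> 'a set \<Rightarrow> real" where
  "hausdorff_cb K L = (SUP u\<in>sphere 0 1. \<bar>support_fun K u - support_fun L u\<bar>)"

text \<open>Vitale zonoid of an integrable random vector X on a probability space M:
  the convex body whose support function is u \<mapsto> 1/2 E|<u,X>|.\<close>
definition vitale_zonoid :: "'b measure \<Rightarrow> ('b \<Rightarrow> 'a::euclidean_space) \<Rightarrow> 'a set" where
  "vitale_zonoid M X = {x. \<forall>u. inner u x \<le> (1/2) * (\<integral>\<omega>. \<bar>inner u (X \<omega>)\<bar> \<partial>M)}"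

definition std_gauss_density :: "'a::euclidean_space \<Rightarrow> real" where
  "std_gauss_density x = (2 * pi) powr (- real DIM('a) / 2) * exp (- (norm x)\<^sup>2 / 2)"

definition std_gauss :: "'a::euclidean_space measure" where
  "std_gauss = density lborel (\<lambda>x. ennreal (std_gauss_density x))"

definition G :: "'a::euclidean_space \<Rightarrow> 'a set" where
  "G c = vitale_zonoid std_gauss (\<lambda>\<xi>. c + \<xi>)"

end

theory Submission
  imports Defs
begin
lemma a1: "1 / sqrt (2 * pi) = (2 * pi) powr (- 1 / 2)"
proof -
  have "(2 * pi) powr (- 1 / 2) = (2 * pi) powr (- (1 / 2))" by simp
  also have "\<dots> = inverse ((2 * pi) powr (1 / 2))" by (rule powr_minus)
  also have "\<dots> = 1 / sqrt (2 * pi)"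
  proof -
    have "(2 * pi) powr (1 / 2) = sqrt (2 * pi)" by (rule powr_half_sqrt) simp
    then show ?thesis by (simp only: inverse_eq_divide)
  qed
  finally show ?thesis ..
qed
lemma a2: "((2 * pi) powr (- 1 / 2)) ^ n = (2 * pi) powr ((- 1 / 2) * real n)"
proof -
  have "((2 * pi) powr (- 1 / 2)) ^ n = ((2 * pi) powr (- 1 / 2)) powr (real n)"
    by (rule powr_realpow[symmetric]) simp
  also have "\<dots> = (2 * pi) powr ((- 1 / 2) * real n)" by (rule powr_powr)
  finally show ?thesis .
qed

lemma sgd_prod:
  "std_gauss_density (x::'a::euclidean_space) = (\<Prod>b\<in>Basis. std_normal_density (x \<bullet> b))"
proof -
  have n: "(norm x)\<^sup>2 = (\<Sum>b\<in>Basis. (x \<bullet> b)\<^sup>2)"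
  proof -
    have "(norm x)\<^sup>2 = x \<bullet> x" by (rule power2_norm_eq_inner)
    also have "\<dots> = (\<Sum>b\<in>Basis. (x \<bullet> b) * (x \<bullet> b))" by (rule euclidean_inner)
    finally show ?thesis by (simp add: power2_eq_square)
  qed
  have p: "(2 * pi) powr (- real DIM('a) / 2) = (1 / sqrt (2 * pi)) ^ DIM('a)"
    unfolding a1 a2 by simp
  have e: "exp (- (norm x)\<^sup>2 / 2) = (\<Prod>b\<in>Basis. exp (- (x \<bullet> b)\<^sup>2 / 2))"
    unfolding n by (simp add: exp_sum[symmetric] sum_divide_distrib sum_negf)
  show ?thesis
    unfolding std_gauss_density_def std_normal_density_def prod.distrib p e
    by simp
qed

lemma sgd_pos: "0 < std_gauss_density x"
  by (simp add: std_gauss_density_def)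

lemma sgd_meas[measurable]: "std_gauss_density \<in> borel_measurable borel"
  unfolding std_gauss_density_def by measurable

lemma sgd_uminus: "std_gauss_density (- x) = std_gauss_density x"
  by (simp add: std_gauss_density_def)

lemma nn_sn: "(\<integral>\<^sup>+x. ennreal (std_normal_density x) \<partial>lborel) = 1"
proof -
  have "emeasure (density lborel (\<lambda>x. ennreal (std_normal_density x)))
     (space (density lborel (\<lambda>x. ennreal (std_normal_density x)))) = 1"
    by (rule prob_space.emeasure_space_1[OF prob_space_normal_density]) simp
  then have "emeasure (density lborel (\<lambda>x. ennreal (std_normal_density x))) UNIV = 1"
    by (simp only: space_density space_lborel space_borel)
  moreover have "emeasure (density lborel (\<lambda>x. ennreal (std_normal_density x))) UNIV
     = (\<integral>\<^sup>+x. ennreal (std_normal_density x) * indicator UNIV x \<partial>lborel)"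
    by (rule emeasure_density) auto
  ultimately show ?thesis by simp
qed

lemma nn_sn_abs: "(\<integral>\<^sup>+x. ennreal (std_normal_density x * \<bar>x\<bar>) \<partial>lborel) < \<infinity>"
  using integrable_std_normal_moment_abs[of 1] 
  by (simp add: integrable_iff_bounded)

lemma sg_prob: "prob_space (std_gauss :: 'a::euclidean_space measure)"
proof
  have "emeasure (std_gauss :: 'a measure) (space std_gauss) =
     (\<integral>\<^sup>+x. (\<Prod>b\<in>Basis. ennreal (std_normal_density (x \<bullet> b))) \<partial>(lborel::'a measure))"
    by (simp add: std_gauss_def emeasure_density sgd_prod prod_ennreal)
  also have "\<dots> = (\<Prod>b\<in>(Basis::'a set). (\<integral>\<^sup>+x. ennreal (std_normal_density x) \<partial>lborel))"
    by (rule nn_integral_lborel_prod) auto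
  finally show "emeasure (std_gauss :: 'a measure) (space std_gauss) = 1" by (simp add: nn_sn)
qed

lemma prod_lt_top: "(\<And>i. i \<in> A \<Longrightarrow> f i < (\<infinity>::ennreal)) \<Longrightarrow> prod f A < \<infinity>"
  by (induction A rule: infinite_finite_induct) (auto simp: ennreal_mult_less_top)

lemma sg_abs_comp:
  assumes b0: "(b0::'a::euclidean_space) \<in> Basis"
  shows "integrable lborel (\<lambda>x::'a. std_gauss_density x * \<bar>x \<bullet> b0\<bar>)"
proof (rule integrableI_bounded)
  show "(\<lambda>x::'a. std_gauss_density x * \<bar>x \<bullet> b0\<bar>) \<in> borel_measurable lborel" by measurable
  define f where "f b t = ennreal (std_normal_density t * (if b = b0 then \<bar>t\<bar> else 1))" for b t
  have "(\<integral>\<^sup>+x. ennreal (norm (std_gauss_density x * \<bar>x \<bullet> b0\<bar>)) \<partial>(lborel::'a measure))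
      = (\<integral>\<^sup>+x. (\<Prod>b\<in>Basis. f b (x \<bullet> b)) \<partial>(lborel::'a measure))"
  proof (rule nn_integral_cong)
    fix x :: 'a
    have "(\<Prod>b\<in>Basis. f b (x \<bullet> b)) = ennreal (\<Prod>b\<in>Basis. std_normal_density (x \<bullet> b) * (if b = b0 then \<bar>x \<bullet> b\<bar> else 1))"
      unfolding f_def by (rule prod_ennreal) simp
    also have "(\<Prod>b\<in>Basis. std_normal_density (x \<bullet> b) * (if b = b0 then \<bar>x \<bullet> b\<bar> else 1))
       = std_gauss_density x * \<bar>x \<bullet> b0\<bar>"
      unfolding prod.distrib sgd_prod using b0 by (simp add: prod.delta)
    finally show "ennreal (norm (std_gauss_density x * \<bar>x \<bullet> b0\<bar>)) = (\<Prod>b\<in>Basis. f b (x \<bullet> b))"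
      using sgd_pos[of x] by (simp add: abs_mult)
  qed
  also have "\<dots> = (\<Prod>b\<in>(Basis::'a set). (\<integral>\<^sup>+t. f b t \<partial>lborel))"
    by (rule nn_integral_lborel_prod) (auto simp: f_def)
  also have "\<dots> < \<infinity>"
  proof (rule prod_lt_top)
    fix i :: 'a
    show "(\<integral>\<^sup>+t. f i t \<partial>lborel) < \<infinity>"
    proof (cases "i = b0")
      case True
      then show ?thesis using nn_sn_abs by (simp add: f_def)
    next
      case False
      then show ?thesis using nn_sn by (simp add: f_def)
    qed
  qed
  finally show "(\<integral>\<^sup>+x. ennreal (norm (std_gauss_density x * \<bar>x \<bullet> b0\<bar>)) \<partial>(lborel::'a measure)) < \<infinity>" .
qed

lemma sg_space[simp]: "space std_gauss = UNIV"
  by (simp add: std_gauss_def)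

lemma sg_sets[simp]: "sets std_gauss = sets borel"
  by (simp add: std_gauss_def)

lemma sg_pw: "norm (std_gauss_density x *\<^sub>R norm x) \<le> norm (\<Sum>b\<in>Basis. std_gauss_density x * \<bar>(x::'a::euclidean_space) \<bullet> b\<bar>)"
proof -
  have "std_gauss_density x * norm x \<le> std_gauss_density x * (\<Sum>b\<in>Basis. \<bar>x \<bullet> b\<bar>)"
    using sgd_pos[of x] norm_le_l1[of x] by (intro mult_left_mono) auto
  then show ?thesis
    using sgd_pos[of x] by (simp add: sum_distrib_left[symmetric] abs_mult sum_nonneg)
qed

lemma sg_integrable_norm: "integrable std_gauss (\<lambda>x::'a::euclidean_space. norm x)"
proof -
  have "integrable lborel (\<lambda>x::'a. \<Sum>b\<in>Basis. std_gauss_density x * \<bar>x \<bullet> b\<bar>)"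
    by (intro Bochner_Integration.integrable_sum sg_abs_comp)
  then have "integrable lborel (\<lambda>x::'a. std_gauss_density x *\<^sub>R norm x)"
  proof (rule Bochner_Integration.integrable_bound)
    show "(\<lambda>x::'a. std_gauss_density x *\<^sub>R norm x) \<in> borel_measurable lborel" by measurable
    show "AE x in lborel. norm (std_gauss_density x *\<^sub>R norm x) \<le> norm (\<Sum>b\<in>Basis. std_gauss_density x * \<bar>x \<bullet> b\<bar>)"
      using sg_pw by (intro AE_I2) blast
  qed
  then show ?thesis
    unfolding std_gauss_def by (subst integrable_density) (auto intro: less_imp_le sgd_pos)
qed

lemma sg_integrable:
  fixes f :: "'a::euclidean_space \<Rightarrow> real"
  assumes fm[measurable]: "f \<in> borel_measurable borel"
    and bnd: "\<And>x. \<bar>f x\<bar> \<le> A + B * norm x"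
  shows "integrable std_gauss f"
proof -
  interpret prob_space "std_gauss :: 'a measure" by (rule sg_prob)
  have "integrable std_gauss (\<lambda>x::'a. A + B * norm x)"
    using sg_integrable_norm by auto
  then show ?thesis
  proof (rule Bochner_Integration.integrable_bound)
    show "f \<in> borel_measurable std_gauss"
      by (subst measurable_cong_sets[OF sg_sets refl]) (rule fm)
    show "AE x in std_gauss. norm (f x) \<le> norm (A + B * norm x)"
    proof (rule AE_I2)
      fix x
      have "\<bar>f x\<bar> \<le> A + B * norm x" by (rule bnd)
      also have "\<dots> \<le> \<bar>A + B * norm x\<bar>" by (rule abs_ge_self)
      finally show "norm (f x) \<le> norm (A + B * norm x)" by simp
    qed
  qed
qed

lemma lborel_uminus: "distr lborel borel uminus = (lborel :: 'a::euclidean_space measure)"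
  using lborel_affine[of "-1" "0::'a"] by (simp add: density_1)

lemma sg_symm:
  fixes f :: "'a::euclidean_space \<Rightarrow> real"
  assumes [measurable]: "f \<in> borel_measurable borel"
  shows "(\<integral>x. f (- x) \<partial>std_gauss) = (\<integral>x. f x \<partial>std_gauss)"
proof -
  have "(\<integral>x. f (- x) \<partial>std_gauss) = (\<integral>x. std_gauss_density x * f (- x) \<partial>lborel)"
    unfolding std_gauss_def by (subst integral_density) (auto intro: less_imp_le sgd_pos)
  also have "\<dots> = (\<integral>x. (\<lambda>y. std_gauss_density y * f y) (- x) \<partial>lborel)"
    by (simp add: sgd_uminus)
  also have "\<dots> = (\<integral>y. std_gauss_density y * f y \<partial>(distr lborel borel uminus))"
    by (subst integral_distr) auto
  also have "\<dots> = (\<integral>x. f x \<partial>std_gauss)"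
    unfolding lborel_uminus std_gauss_def by (subst integral_density) (auto intro: less_imp_le sgd_pos)
  finally show ?thesis .
qed

definition H :: "'a::euclidean_space \<Rightarrow> 'a \<Rightarrow> real" where
  "H c u = 1/2 * (\<integral>\<xi>. \<bar>u \<bullet> (c + \<xi>)\<bar> \<partial>std_gauss)"

lemma G_eq: "G c = {x. \<forall>u. u \<bullet> x \<le> H c u}"
  by (simp add: G_def vitale_zonoid_def H_def)

lemma inner_bound: "\<bar>v \<bullet> (c + \<xi>)\<bar> \<le> norm v * norm c + norm v * norm (\<xi>::'a::euclidean_space)"
proof -
  have "\<bar>v \<bullet> (c + \<xi>)\<bar> \<le> norm v * norm (c + \<xi>)" by (rule Cauchy_Schwarz_ineq2)
  also have "\<dots> \<le> norm v * (norm c + norm \<xi>)" by (intro mult_left_mono norm_triangle_ineq) auto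
  finally show ?thesis by (simp add: algebra_simps)
qed

lemma int_abs: "integrable std_gauss (\<lambda>\<xi>. \<bar>v \<bullet> (c + \<xi>)\<bar>)"
  by (rule sg_integrable[where A="norm v * norm c" and B="norm v"]) (auto simp: inner_bound)

lemma int_lin:
  assumes [measurable]: "g \<in> borel_measurable borel" and g: "\<And>x. \<bar>g x\<bar> \<le> 1"
  shows "integrable std_gauss (\<lambda>\<xi>. g \<xi> * (v \<bullet> (c + (\<xi>::'a::euclidean_space))))"
proof (rule sg_integrable[where A="norm v * norm c" and B="norm v"])
  fix x :: 'a
  have "\<bar>g x * (v \<bullet> (c + x))\<bar> \<le> 1 * \<bar>v \<bullet> (c + x)\<bar>"
    unfolding abs_mult by (intro mult_right_mono g) auto
  then show "\<bar>g x * (v \<bullet> (c + x))\<bar> \<le> norm v * norm c + norm v * norm x"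
    using inner_bound[of v c x] by simp
qed measurable

lemma sgn_self: "sgn (a::real) * a = \<bar>a\<bar>"
  by (cases "a > 0") (auto simp: sgn_if)

lemma witness: "\<exists>x0\<in>G c. u \<bullet> x0 = H c u"
proof -
  interpret prob_space "std_gauss :: 'a measure" by (rule sg_prob)
  define s where "s \<xi> = sgn (u \<bullet> (c + \<xi>))" for \<xi> :: 'a
  have [measurable]: "s \<in> borel_measurable borel" unfolding s_def by measurable
  have s1: "\<bar>s x\<bar> \<le> 1" for x by (simp add: s_def abs_sgn_eq)
  define x0 where "x0 = (\<Sum>b\<in>Basis. (1/2 * (\<integral>\<xi>. s \<xi> * ((c + \<xi>) \<bullet> b) \<partial>std_gauss)) *\<^sub>R b)"
  have key: "v \<bullet> x0 = 1/2 * (\<integral>\<xi>. s \<xi> * (v \<bullet> (c + \<xi>)) \<partial>std_gauss)" for v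
  proof -
    have "v \<bullet> x0 = (\<Sum>b\<in>Basis. 1/2 * ((\<integral>\<xi>. s \<xi> * ((c + \<xi>) \<bullet> b) \<partial>std_gauss) * (v \<bullet> b)))"
      by (simp add: x0_def inner_sum_right)
    also have "\<dots> = 1/2 * (\<Sum>b\<in>Basis. (\<integral>\<xi>. s \<xi> * ((c + \<xi>) \<bullet> b) * (v \<bullet> b) \<partial>std_gauss))"
      by (simp add: sum_distrib_left)
    also have "\<dots> = 1/2 * (\<integral>\<xi>. (\<Sum>b\<in>Basis. s \<xi> * ((c + \<xi>) \<bullet> b) * (v \<bullet> b)) \<partial>std_gauss)"
    proof -
      have "integrable std_gauss (\<lambda>\<xi>. s \<xi> * ((c + \<xi>) \<bullet> b) * (v \<bullet> b))" for b
        using int_lin[of s b c] s1 by (simp add: inner_commute)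
      then show ?thesis by (subst Bochner_Integration.integral_sum) auto
    qed
    also have "\<dots> = 1/2 * (\<integral>\<xi>. s \<xi> * (v \<bullet> (c + \<xi>)) \<partial>std_gauss)"
    proof -
      have "(\<Sum>b\<in>Basis. s \<xi> * ((c + \<xi>) \<bullet> b) * (v \<bullet> b)) = s \<xi> * (v \<bullet> (c + \<xi>))" for \<xi>
      proof -
        have e: "v \<bullet> (c + \<xi>) = (\<Sum>b\<in>Basis. (v \<bullet> b) * ((c + \<xi>) \<bullet> b))" by (rule euclidean_inner)
        show ?thesis unfolding e sum_distrib_left by (simp only: mult_ac)
      qed
      then show ?thesis by simp
    qed
    finally show ?thesis .
  qed
  have "x0 \<in> G c"
    unfolding G_eq
  proof (safe)
    fix v
    have "(\<integral>\<xi>. s \<xi> * (v \<bullet> (c + \<xi>)) \<partial>std_gauss) \<le> (\<integral>\<xi>. \<bar>v \<bullet> (c + \<xi>)\<bar> \<partial>std_gauss)"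
    proof (rule integral_mono)
      show "integrable std_gauss (\<lambda>\<xi>. s \<xi> * (v \<bullet> (c + \<xi>)))" by (rule int_lin) (auto simp: s1)
      show "integrable std_gauss (\<lambda>\<xi>. \<bar>v \<bullet> (c + \<xi>)\<bar>)" by (rule int_abs)
      fix x
      have "s x * (v \<bullet> (c + x)) \<le> \<bar>s x * (v \<bullet> (c + x))\<bar>" by simp
      also have "\<dots> \<le> 1 * \<bar>v \<bullet> (c + x)\<bar>" unfolding abs_mult by (intro mult_right_mono s1) auto
      finally show "s x * (v \<bullet> (c + x)) \<le> \<bar>v \<bullet> (c + x)\<bar>" by simp
    qed
    then show "v \<bullet> x0 \<le> H c v" by (simp add: key H_def)
  qed
  moreover have "u \<bullet> x0 = H c u"
    by (simp add: key H_def s_def sgn_self)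
  ultimately show ?thesis by blast
qed

lemma support_G: "support_fun (G c) u = H c u"
proof -
  obtain x0 where x0: "x0 \<in> G c" "u \<bullet> x0 = H c u" using witness by blast
  show ?thesis
    unfolding support_fun_def
  proof (rule cSup_eq_maximum)
    show "H c u \<in> (\<lambda>x. u \<bullet> x) ` G c"
      by (rule image_eqI[of _ _ x0]) (use x0 in auto)
    show "\<And>y. y \<in> (\<lambda>x. u \<bullet> x) ` G c \<Longrightarrow> y \<le> H c u"
      by (auto simp: G_eq)
  qed
qed

lemma H_lip: fixes c :: "'a::euclidean_space" shows "\<bar>H c u - H c0 u\<bar> \<le> 1/2 * (norm u * norm (c - c0))"
proof -
  interpret prob_space "std_gauss :: 'a measure" by (rule sg_prob)
  define E where "E = (\<integral>\<xi>. \<bar>u \<bullet> (c + \<xi>)\<bar> - \<bar>u \<bullet> (c0 + \<xi>)\<bar> \<partial>std_gauss)"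
  have d: "H c u - H c0 u = 1/2 * (\<integral>\<xi>. \<bar>u \<bullet> (c + \<xi>)\<bar> - \<bar>u \<bullet> (c0 + \<xi>)\<bar> \<partial>std_gauss)"
    unfolding H_def by (subst Bochner_Integration.integral_diff[OF int_abs int_abs]) (simp add: algebra_simps)
  have b: "\<bar>\<integral>\<xi>. \<bar>u \<bullet> (c + \<xi>)\<bar> - \<bar>u \<bullet> (c0 + \<xi>)\<bar> \<partial>std_gauss\<bar> \<le> (\<integral>\<xi>. \<bar>u \<bullet> (c - c0)\<bar> \<partial>(std_gauss::'a measure))"
  proof -
    have "\<bar>\<integral>\<xi>. \<bar>u \<bullet> (c + \<xi>)\<bar> - \<bar>u \<bullet> (c0 + \<xi>)\<bar> \<partial>std_gauss\<bar> \<le> (\<integral>\<xi>. \<bar>\<bar>u \<bullet> (c + \<xi>)\<bar> - \<bar>u \<bullet> (c0 + \<xi>)\<bar>\<bar> \<partial>std_gauss)"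
      by (rule integral_abs_bound)
    also have "\<dots> \<le> (\<integral>\<xi>. \<bar>u \<bullet> (c - c0)\<bar> \<partial>(std_gauss::'a measure))"
    proof (rule integral_mono)
      show "integrable std_gauss (\<lambda>\<xi>. \<bar>\<bar>u \<bullet> (c + \<xi>)\<bar> - \<bar>u \<bullet> (c0 + \<xi>)\<bar>\<bar>)"
        by (intro integrable_abs Bochner_Integration.integrable_diff int_abs)
      show "integrable std_gauss (\<lambda>\<xi>::'a. \<bar>u \<bullet> (c - c0)\<bar>)" by simp
      fix x
      have "u \<bullet> (c + x) - u \<bullet> (c0 + x) = u \<bullet> (c - c0)" by (simp add: inner_simps)
      then show "\<bar>\<bar>u \<bullet> (c + x)\<bar> - \<bar>u \<bullet> (c0 + x)\<bar>\<bar> \<le> \<bar>u \<bullet> (c - c0)\<bar>" by linarith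
    qed
    finally show ?thesis .
  qed
  have i: "(\<integral>\<xi>. \<bar>u \<bullet> (c - c0)\<bar> \<partial>(std_gauss::'a measure)) = \<bar>u \<bullet> (c - c0)\<bar>"
    using prob_space by simp
  have cs: "\<bar>u \<bullet> (c - c0)\<bar> \<le> norm u * norm (c - c0)" by (rule Cauchy_Schwarz_ineq2)
  have "\<bar>H c u - H c0 u\<bar> = 1/2 * \<bar>E\<bar>" unfolding d E_def by (simp add: abs_mult)
  then show ?thesis using b i cs unfolding E_def by linarith
qed

lemma hd_bounds: "0 \<le> hausdorff_cb (G c) (G c0) \<and> hausdorff_cb (G c) (G c0) \<le> 1/2 * norm (c - c0)"
proof -
  obtain b :: 'a where b: "b \<in> Basis" using nonempty_Basis by blast
  then have bs: "b \<in> sphere 0 1" by simp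
  have le: "\<bar>H c u - H c0 u\<bar> \<le> 1/2 * norm (c - c0)" if "u \<in> sphere 0 1" for u
    using H_lip[of c u c0] that by simp
  have bdd: "bdd_above ((\<lambda>u. \<bar>H c u - H c0 u\<bar>) ` sphere 0 1)"
    using le by (intro bdd_aboveI2) 
  show ?thesis
    unfolding hausdorff_cb_def support_G
  proof
    show "0 \<le> (SUP u\<in>sphere 0 1. \<bar>H c u - H c0 u\<bar>)"
      by (rule cSUP_upper2[OF bdd bs]) simp
    show "(SUP u\<in>sphere 0 1. \<bar>H c u - H c0 u\<bar>) \<le> 1/2 * norm (c - c0)"
      using bs le by (intro cSUP_least) auto
  qed
qed

lemma part1: "((\<lambda>c. hausdorff_cb (G c) (G c0)) \<longlongrightarrow> 0) (at c0)"
proof (rule tendsto_sandwich[where f="\<lambda>_. 0" and h="\<lambda>c. 1/2 * norm (c - c0)"])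
  show "\<forall>\<^sub>F c in at c0. 0 \<le> hausdorff_cb (G c) (G c0)"
    by (rule always_eventually) (use hd_bounds in blast)
  show "\<forall>\<^sub>F c in at c0. hausdorff_cb (G c) (G c0) \<le> 1/2 * norm (c - c0)"
    by (rule always_eventually) (use hd_bounds in blast)
  show "((\<lambda>_. 0::real) \<longlongrightarrow> 0) (at c0)" by simp
  have "((\<lambda>c. 1/2 * norm (c - c0)) \<longlongrightarrow> 1/2 * norm (c0 - c0)) (at c0)"
    by (intro tendsto_intros)
  then show "((\<lambda>c. 1/2 * norm (c - c0)) \<longlongrightarrow> 0) (at c0)" by simp
qed

lemma sym_abs: "(\<integral>\<xi>. \<bar>a + u \<bullet> \<xi>\<bar> \<partial>std_gauss) = (\<integral>\<xi>. max \<bar>a\<bar> \<bar>u \<bullet> (\<xi>::'a::euclidean_space)\<bar> \<partial>std_gauss)"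
proof -
  have i1: "integrable std_gauss (\<lambda>\<xi>::'a. \<bar>a + u \<bullet> \<xi>\<bar>)"
    by (rule sg_integrable[where A="\<bar>a\<bar>" and B="norm u"])
       (auto intro: order_trans[OF abs_triangle_ineq] add_left_mono Cauchy_Schwarz_ineq2)
  have i2: "integrable std_gauss (\<lambda>\<xi>::'a. \<bar>a - u \<bullet> \<xi>\<bar>)"
    by (rule sg_integrable[where A="\<bar>a\<bar>" and B="norm u"])
       (auto intro: order_trans[OF abs_triangle_ineq4] add_left_mono Cauchy_Schwarz_ineq2)
  have "(\<integral>\<xi>. \<bar>a - u \<bullet> \<xi>\<bar> \<partial>std_gauss) = (\<integral>\<xi>. \<bar>a + u \<bullet> (- \<xi>)\<bar> \<partial>std_gauss)"
    by simp
  also have "\<dots> = (\<integral>\<xi>. \<bar>a + u \<bullet> \<xi>\<bar> \<partial>std_gauss)"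
    by (rule sg_symm[where f="\<lambda>\<xi>. \<bar>a + u \<bullet> \<xi>\<bar>"]) measurable
  finally have e: "(\<integral>\<xi>. \<bar>a - u \<bullet> \<xi>\<bar> \<partial>std_gauss) = (\<integral>\<xi>. \<bar>a + u \<bullet> \<xi>\<bar> \<partial>std_gauss)" .
  have pw: "\<bar>a + z\<bar> + \<bar>a - z\<bar> = 2 * max \<bar>a\<bar> \<bar>z\<bar>" for z :: real
    by (auto simp: abs_if max_def)
  have "2 * (\<integral>\<xi>. \<bar>a + u \<bullet> \<xi>\<bar> \<partial>std_gauss) = (\<integral>\<xi>. \<bar>a + u \<bullet> \<xi>\<bar> + \<bar>a - u \<bullet> \<xi>\<bar> \<partial>std_gauss)"
    using e i1 i2 by (subst Bochner_Integration.integral_add) auto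
  also have "\<dots> = (\<integral>\<xi>. 2 * max \<bar>a\<bar> \<bar>u \<bullet> \<xi>\<bar> \<partial>std_gauss)"
    by (simp only: pw)
  also have "\<dots> = 2 * (\<integral>\<xi>. max \<bar>a\<bar> \<bar>u \<bullet> \<xi>\<bar> \<partial>std_gauss)" by simp
  finally show ?thesis by simp
qed

lemma H_max: "H (t *\<^sub>R c) u = 1/2 * (\<integral>\<xi>. max \<bar>t * (u \<bullet> c)\<bar> \<bar>u \<bullet> \<xi>\<bar> \<partial>std_gauss)"
  unfolding H_def using sym_abs[of "t * (u \<bullet> c)" u] by (simp add: inner_simps)

lemma int_max: "integrable std_gauss (\<lambda>\<xi>. max (b::real) \<bar>u \<bullet> (\<xi>::'a::euclidean_space)\<bar>)"
proof (rule sg_integrable[where A="\<bar>b\<bar>" and B="norm u"])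
  fix x :: 'a
  have "\<bar>u \<bullet> x\<bar> \<le> norm u * norm x" by (rule Cauchy_Schwarz_ineq2)
  then show "\<bar>max b \<bar>u \<bullet> x\<bar>\<bar> \<le> \<bar>b\<bar> + norm u * norm x"
    using abs_ge_zero[of b] mult_nonneg_nonneg[OF norm_ge_zero norm_ge_zero, of u x]
    by (auto simp: max_def)
qed measurable

lemma H_mono:
  assumes "0 \<le> s" "s \<le> t"
  shows "H (s *\<^sub>R c) u \<le> H (t *\<^sub>R c) u"
  unfolding H_max
proof -
  have "\<bar>s * (u \<bullet> c)\<bar> \<le> \<bar>t * (u \<bullet> c)\<bar>" using assms
    by (simp add: abs_mult mult_right_mono)
  then have "(\<integral>\<xi>. max \<bar>s * (u \<bullet> c)\<bar> \<bar>u \<bullet> \<xi>\<bar> \<partial>std_gauss) \<le> (\<integral>\<xi>. max \<bar>t * (u \<bullet> c)\<bar> \<bar>u \<bullet> \<xi>\<bar> \<partial>std_gauss)"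
    by (intro integral_mono int_max) auto
  then show "1/2 * (\<integral>\<xi>. max \<bar>s * (u \<bullet> c)\<bar> \<bar>u \<bullet> \<xi>\<bar> \<partial>std_gauss) \<le> 1/2 * (\<integral>\<xi>. max \<bar>t * (u \<bullet> c)\<bar> \<bar>u \<bullet> \<xi>\<bar> \<partial>std_gauss)"
    by simp
qed

lemma ball_pos: "0 < \<rho> \<Longrightarrow> 0 < measure std_gauss (ball (0::'a::euclidean_space) \<rho>)"
proof -
  assume r: "0 < \<rho>"
  interpret prob_space "std_gauss :: 'a measure" by (rule sg_prob)
  have lb: "emeasure lborel (ball (0::'a) \<rho>) \<noteq> 0"
  proof -
    have "0 < unit_ball_vol (real DIM('a)) * \<rho> ^ DIM('a)" using r by simp
    moreover have "emeasure lborel (ball (0::'a) \<rho>) = ennreal (unit_ball_vol (real DIM('a)) * \<rho> ^ DIM('a))"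
      by (rule emeasure_ball) (use r in simp)
    ultimately show ?thesis by (simp only: ennreal_eq_0_iff not_le)
  qed
  have "emeasure std_gauss (ball (0::'a) \<rho>) \<noteq> 0"
  proof
    assume "emeasure std_gauss (ball (0::'a) \<rho>) = 0"
    then have "(\<integral>\<^sup>+x. ennreal (std_gauss_density x) * indicator (ball (0::'a) \<rho>) x \<partial>lborel) = 0"
      unfolding std_gauss_def by (subst (asm) emeasure_density) auto
    then have "AE x in lborel. ennreal (std_gauss_density x) * indicator (ball (0::'a) \<rho>) x = 0"
      by (subst (asm) nn_integral_0_iff_AE) (auto intro!: borel_measurable_times_ennreal borel_measurable_indicator)
    then have "AE x in lborel. x \<notin> ball (0::'a) \<rho>"
      by (rule AE_mp) (auto intro!: AE_I2 simp: sgd_pos less_imp_le sgd_pos[THEN less_imp_neq, symmetric] split: split_indicator)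
    then have "emeasure lborel (ball (0::'a) \<rho>) = 0"
      by (subst (asm) AE_iff_measurable[where N="ball 0 \<rho>"]) auto
    with lb show False by simp
  qed
  then show ?thesis
    by (simp add: emeasure_eq_measure zero_less_measure_iff)
qed

lemma H_strict:
  assumes c: "c \<noteq> 0" and st: "0 < s" "s < t"
  shows "H (s *\<^sub>R c) c < H (t *\<^sub>R c) (c::'a::euclidean_space)"
proof -
  interpret prob_space "std_gauss :: 'a measure" by (rule sg_prob)
  define a where "a = c \<bullet> c"
  have a: "a = (norm c)\<^sup>2" unfolding a_def by (simp add: power2_norm_eq_inner)
  have apos: "0 < a" using c by (simp add: a)
  define B where "B = ball (0::'a) (s * norm c)"
  have Bpos: "0 < measure std_gauss B" unfolding B_def using c st by (intro ball_pos) auto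
  have pw: "(t - s) * a * indicator B x \<le> max (t * a) \<bar>c \<bullet> x\<bar> - max (s * a) \<bar>c \<bullet> x\<bar>" for x
  proof (cases "x \<in> B")
    case True
    have "\<bar>c \<bullet> x\<bar> \<le> norm c * norm x" by (rule Cauchy_Schwarz_ineq2)
    also have "\<dots> \<le> norm c * (s * norm c)" using True by (intro mult_left_mono) (auto simp: B_def)
    also have "\<dots> = s * a" by (simp add: a power2_eq_square)
    finally have "\<bar>c \<bullet> x\<bar> \<le> s * a" .
    moreover have "s * a \<le> t * a" using st apos by simp
    ultimately show ?thesis using True by (simp add: algebra_simps max_def)
  next
    case False
    have "s * a \<le> t * a" using st apos by simp
    then show ?thesis using False by (simp add: max_def)
  qed
  have "(\<integral>x. (t - s) * a * indicator B x \<partial>std_gauss) \<le> (\<integral>x. max (t * a) \<bar>c \<bullet> x\<bar> - max (s * a) \<bar>c \<bullet> x\<bar> \<partial>std_gauss)"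
  proof (rule integral_mono)
    have "integrable std_gauss (indicator B :: 'a \<Rightarrow> real)"
      by (rule integrable_real_indicator) (auto simp: B_def less_top[symmetric])
    then show "integrable std_gauss (\<lambda>x. (t - s) * a * indicator B x)" by simp
    show "integrable std_gauss (\<lambda>x. max (t * a) \<bar>c \<bullet> x\<bar> - max (s * a) \<bar>c \<bullet> x\<bar>)"
      by (intro Bochner_Integration.integrable_diff int_max)
    show "\<And>x. x \<in> space std_gauss \<Longrightarrow> (t - s) * a * indicator B x \<le> max (t * a) \<bar>c \<bullet> x\<bar> - max (s * a) \<bar>c \<bullet> x\<bar>"
      using pw by blast
  qed
  also have "\<dots> = (\<integral>x. max (t * a) \<bar>c \<bullet> x\<bar> \<partial>std_gauss) - (\<integral>x. max (s * a) \<bar>c \<bullet> x\<bar> \<partial>std_gauss)"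
    by (intro Bochner_Integration.integral_diff int_max)
  finally have "(t - s) * a * measure std_gauss B \<le> (\<integral>x. max (t * a) \<bar>c \<bullet> x\<bar> \<partial>std_gauss) - (\<integral>x. max (s * a) \<bar>c \<bullet> x\<bar> \<partial>std_gauss)"
    by (simp add: B_def)
  moreover have "0 < (t - s) * a * measure std_gauss B" using st apos Bpos by simp
  moreover have "\<bar>s * a\<bar> = s * a" "\<bar>t * a\<bar> = t * a" using st apos by auto
  ultimately show ?thesis unfolding H_max a_def[symmetric] by simp
qed

lemma part2:
  assumes c: "c \<noteq> 0" and st: "0 < s" "s < t"
  shows "G (s *\<^sub>R c) \<subset> G (t *\<^sub>R (c::'a::euclidean_space))"
proof
  show "G (s *\<^sub>R c) \<subseteq> G (t *\<^sub>R c)"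
    unfolding G_eq using H_mono[of s t c] st by (auto intro: order_trans)
  obtain x0 where x0: "x0 \<in> G (t *\<^sub>R c)" "c \<bullet> x0 = H (t *\<^sub>R c) c" using witness by blast
  have "x0 \<notin> G (s *\<^sub>R c)"
  proof
    assume "x0 \<in> G (s *\<^sub>R c)"
    then have "c \<bullet> x0 \<le> H (s *\<^sub>R c) c" unfolding G_eq by blast
    with x0(2) H_strict[OF assms] show False by linarith
  qed
  with x0(1) show "G (s *\<^sub>R c) \<noteq> G (t *\<^sub>R c)" by blast
qed

theorem proposition2p9:
  shows "(\<forall>c0 :: 'a::euclidean_space.
            ((\<lambda>c. hausdorff_cb (G c) (G c0)) \<longlongrightarrow> 0) (at c0))
       \<and> (\<forall>(c :: 'a) (s :: real) (t :: real).
            c \<noteq> 0 \<longrightarrow> 0 < s \<longrightarrow> s < t \<longrightarrow> G (s *\<^sub>R c) \<subset> G (t *\<^sub>R c))"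
  using part1 part2 by blast

end
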